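(* A graph $G\in\mathcal{C}_{n,m}$ is Whitney-maximum if and only if it is strong.
   Context: $\mathcal{C}_{n,m}$ denotes the set of all connected simple graphs on $n$ vertices and $m$ edges. For a graph $G$ with vertex set $V$, $\kappa(G)$ is its number of connected components, $r(G)=|V|-\kappa(G)$, $c(G)=|E(G)|-|V|+\kappa(G)$. $\mathcal{S}(G)$ is the set of all spanning subgraphs of $G$. The Whitney polynomial is $W_G(x,y)=\sum_{H\in\mathcal{S}(G)}x^{r(G)-r(H)}y^{c(H)}$. A bivariate polynomial is nonnegative if all its coefficients are nonnegative real numbers. $N_i^{(k)}(G)$ is the number of spanning subgraphs of $G$ with exactly $i$ edges and at most $k$ connected components. A graph $G\in\mathcal{C}_{n,m}$ is strong if $N_i^{(k)}(G)\ge N_i^{(k)}(H)$ for all $H\in\mathcal{C}_{n,m}$, $i\in\{0,\ldots,m\}$, $k\in\{1,\ldots,n\}$. $G\in\mathcal{C}_{n,m}$ is Whitney-maximum if for every $H\in\mathcal{C}_{n,m}$ there is a nonnegative polynomial $Q_H$ with $W_G(x,y)-W_H(x,y)=(1-xy)Q_H(x,y)$. *)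

theory Defs
  imports "HOL-Computational_Algebra.Polynomial"
begin

text \<open>Simple graphs: a finite vertex set V (of naturals) and a set E of 2-element
subsets of V. Spanning subgraphs of (V,E) are (V,F) with F a subset of E.\<close>

definition simple_graph :: "nat set \<Rightarrow> nat set set \<Rightarrow> bool" where
  "simple_graph V E \<longleftrightarrow> finite V \<and> (\<forall>e\<in>E. e \<subseteq> V \<and> card e = 2)"

definition adjrel :: "nat set set \<Rightarrow> (nat \<times> nat) set" where
  "adjrel F = {(u, v). {u, v} \<in> F}"

definition kappa :: "nat set \<Rightarrow> nat set set \<Rightarrow> nat" where
  "kappa V F = card (V // Restr ((adjrel F)\<^sup>*) V)"

definition Cnm :: "nat \<Rightarrow> nat \<Rightarrow> (nat set \<times> nat set set) set" where
  "Cnm n m = {(V, E). simple_graph V E \<and> card V = n \<and> card E = m \<and> kappa V E = 1}"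

definition rk :: "nat set \<Rightarrow> nat set set \<Rightarrow> nat" where
  "rk V F = card V - kappa V F"

definition cyc :: "nat set \<Rightarrow> nat set set \<Rightarrow> nat" where
  "cyc V F = card F + kappa V F - card V"

text \<open>Bivariate polynomials as nested univariate polynomials: the outer variable is y,
the inner variable is x.\<close>
definition varX :: "real poly poly" where "varX = [:[:0, 1:]:]"
definition varY :: "real poly poly" where "varY = [:0, 1:]"

definition whitney :: "nat set \<Rightarrow> nat set set \<Rightarrow> real poly poly" where
  "whitney V E = (\<Sum>F\<in>Pow E. varX ^ (rk V E - rk V F) * varY ^ (cyc V F))"

definition nonneg_poly2 :: "real poly poly \<Rightarrow> bool" where
  "nonneg_poly2 Q \<longleftrightarrow> (\<forall>i j. coeff (coeff Q i) j \<ge> 0)"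

definition whitney_maximum :: "nat \<Rightarrow> nat \<Rightarrow> nat set \<Rightarrow> nat set set \<Rightarrow> bool" where
  "whitney_maximum n m V E \<longleftrightarrow> (V, E) \<in> Cnm n m \<and>
     (\<forall>(V', E') \<in> Cnm n m. \<exists>Q. nonneg_poly2 Q \<and>
        whitney V E - whitney V' E' = (1 - varX * varY) * Q)"

definition Nik :: "nat \<Rightarrow> nat \<Rightarrow> nat set \<Rightarrow> nat set set \<Rightarrow> nat" where
  "Nik i k V E = card {F \<in> Pow E. card F = i \<and> kappa V F \<le> k}"

definition strong :: "nat \<Rightarrow> nat \<Rightarrow> nat set \<Rightarrow> nat set set \<Rightarrow> bool" where
  "strong n m V E \<longleftrightarrow> (V, E) \<in> Cnm n m \<and>
     (\<forall>(V', E') \<in> Cnm n m. \<forall>i \<in> {0..m}. \<forall>k \<in> {1..n}. Nik i k V E \<ge> Nik i k V' E')"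

end

theory Submission
  imports Defs
begin


lemma quot_img: "A // r = (\<lambda>x. r``{x}) ` A" by (auto simp: quotient_def)

lemma kappa_le: "finite V \<Longrightarrow> kappa V F \<le> card V"
  unfolding kappa_def quot_img by (rule card_image_le)

lemma kappa_pos: "finite V \<Longrightarrow> V \<noteq> {} \<Longrightarrow> kappa V F \<ge> 1"
  unfolding kappa_def quot_img by (simp add: Suc_le_eq card_gt_0_iff)

lemma sym_adj: "sym ((adjrel F)\<^sup>*)"
  by (rule sym_rtrancl) (auto simp: sym_def adjrel_def insert_commute)

lemma path_split:
  assumes "(x,z) \<in> (adjrel (insert {u,v} F))\<^sup>*"
  shows "(x,z)\<in>(adjrel F)\<^sup>* \<or> ((x,u)\<in>(adjrel F)\<^sup>* \<and> (v,z)\<in>(adjrel F)\<^sup>*)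
     \<or> ((x,v)\<in>(adjrel F)\<^sup>* \<and> (u,z)\<in>(adjrel F)\<^sup>*)"
  using assms
proof (induction rule: rtrancl_induct)
  case base then show ?case by simp
next
  case (step y z)
  have "{y,z} \<in> F \<or> (y = u \<and> z = v) \<or> (y = v \<and> z = u)"
    using step.hyps(2) by (auto simp: adjrel_def doubleton_eq_iff)
  moreover have "{y,z} \<in> F \<Longrightarrow> (y,z) \<in> adjrel F" by (simp add: adjrel_def)
  ultimately show ?case using step.IH
    by (meson rtrancl.rtrancl_refl rtrancl.rtrancl_into_rtrancl)
qed

lemma kappa_insert:
  assumes fin: "finite V" and uv: "u\<in>V" "v\<in>V"
  shows "kappa V F \<le> kappa V (insert {u,v} F) + 1"
proof -
  define A where "A = (adjrel F)\<^sup>*"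
  define A' where "A' = (adjrel (insert {u,v} F))\<^sup>*"
  define R where "R = Restr A V"
  define R' where "R' = Restr A' V"
  have symA: "sym A" unfolding A_def by (rule sym_adj)
  have transA: "trans A" unfolding A_def by (rule trans_rtrancl)
  have transA': "trans A'" unfolding A'_def by (rule trans_rtrancl)
  have sub: "A \<subseteq> A'" unfolding A_def A'_def
    by (rule rtrancl_mono) (auto simp: adjrel_def)
  have cls: "R``{x} = R``{y}" if "x\<in>V" "y\<in>V" "(x,y)\<in>A" for x y
    using that symA transA unfolding R_def by (auto simp: sym_def dest: transD)
  have gx: "R'``(R``{x}) = R'``{x}" if "x \<in> V" for x
  proof
    show "R'``(R``{x}) \<subseteq> R'``{x}"
      using sub transA' that unfolding R_def R'_def by (auto dest: transD)
    show "R'``{x} \<subseteq> R'``(R``{x})"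
      using that unfolding R_def A_def by auto
  qed
  define g where "g C = R'``C" for C
  have img: "g ` (V//R) = V//R'"
    unfolding quot_img g_def using gx by (auto simp: image_iff)
  have inj: "inj_on g (V//R - {R``{u}})"
  proof (rule inj_onI)
    fix C1 C2 assume c1: "C1 \<in> V//R - {R``{u}}" and c2: "C2 \<in> V//R - {R``{u}}"
      and eq: "g C1 = g C2"
    obtain x where x: "x\<in>V" "C1 = R``{x}" using c1 unfolding quot_img by auto
    obtain y where y: "y\<in>V" "C2 = R``{y}" using c2 unfolding quot_img by auto
    have "R'``{x} = R'``{y}" using eq gx x y unfolding g_def by simp
    moreover have "y \<in> R'``{y}" using y unfolding R'_def A'_def by auto
    ultimately have "(x,y) \<in> A'" unfolding R'_def by auto
    then have "(x,y)\<in>A \<or> ((x,u)\<in>A \<and> (v,y)\<in>A) \<or> ((x,v)\<in>A \<and> (u,y)\<in>A)"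
      unfolding A_def A'_def by (rule path_split)
    moreover have "(u,y)\<in>A \<Longrightarrow> (y,u) \<in> A" using symA by (auto simp: sym_def)
    ultimately show "C1 = C2" using cls x y c1 c2 uv by blast
  qed
  have fq: "finite (V//R)" unfolding quot_img using fin by simp
  have "card (V//R) \<le> card (V//R - {R``{u}}) + 1"
    using fq by (metis card_Diff1_le le_diff_conv card_Diff_singleton_if diff_le_self le_SucI add.commute plus_1_eq_Suc le_refl)
  also have "card (V//R - {R``{u}}) = card (g ` (V//R - {R``{u}}))"
    using inj by (simp add: card_image)
  also have "\<dots> \<le> card (V//R')"
    unfolding img[symmetric] using fq by (intro card_mono) auto
  finally show ?thesis unfolding kappa_def R_def R'_def A_def A'_def by simp
qed

lemma kappa_empty: "kappa V {} = card V"
proof -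
  have "adjrel {} = {}" by (simp add: adjrel_def)
  then have "V // Restr ((adjrel {})\<^sup>*) V = (\<lambda>x. {x}) ` V"
    unfolding quot_img by auto
  then show ?thesis unfolding kappa_def by (simp add: card_image)
qed

lemma forest_bound:
  assumes "finite F" "\<forall>e\<in>F. e \<subseteq> V \<and> card e = 2" "finite V"
  shows "card V \<le> card F + kappa V F"
  using assms
proof (induction F rule: finite_induct)
  case empty then show ?case by (simp add: kappa_empty)
next
  case (insert e F)
  obtain u v where e: "e = {u,v}" using insert.prems by (meson card_2_iff insertI1)
  have uv: "u\<in>V" "v\<in>V" using insert.prems e by auto
  have "kappa V F \<le> kappa V (insert e F) + 1" using kappa_insert[OF \<open>finite V\<close> uv] e by simp
  then show ?case using insert by simp
qed



lemma varX_monom: "varX = monom (monom 1 1) 0"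
  by (simp add: varX_def monom_0 monom_Suc)
lemma varY_monom: "varY = monom 1 1"
  by (simp add: varY_def monom_Suc)

lemma XY_monom: "varX^p * varY^q = monom (monom 1 p) q"
  by (simp add: varX_monom varY_monom monom_power mult_monom)

lemma coeff_XY: "coeff (coeff (varX^p * varY^q) b) a = (if q = b \<and> p = a then 1 else 0)"
  by (simp add: XY_monom coeff_monom)

lemma telescope:
  "varX^p * varY^q = (1 - varX*varY) * (\<Sum>t<d. varX^(p+t) * varY^(q+t)) + varX^(p+d) * varY^(q+d)"
proof (induction d)
  case 0 then show ?case by simp
next
  case (Suc d)
  then show ?case by (simp add: algebra_simps)
qed



lemma sum_ind: "finite A \<Longrightarrow> (\<Sum>x\<in>A. if P x then 1 else 0 :: real) = real (card {x\<in>A. P x})"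
  by (simp add: sum.If_cases Int_def)

lemma arith_aux: "1\<le>(k::nat) \<Longrightarrow> k\<le>n \<Longrightarrow> n \<le> c+k \<Longrightarrow> t < n-(k-1) \<Longrightarrow>
  ((c+k-n+t = b \<and> k-1+t = a) \<longleftrightarrow> (t = a-(k-1) \<and> a<n \<and> c = b+n-a-1 \<and> k \<le> a+1))"
  by arith

definition T :: "nat \<Rightarrow> nat set \<Rightarrow> nat set set \<Rightarrow> real poly poly" where
 "T n V E = (\<Sum>F\<in>Pow E. \<Sum>t< n - (rk V E - rk V F). varX^(rk V E - rk V F + t) * varY^(cyc V F + t))"

lemma cnm_facts:
  assumes "(V,E) \<in> Cnm n m"
  shows "finite V" "card V = n" "card E = m" "kappa V E = 1" "n \<ge> 1" "finite E"
    "\<forall>e\<in>E. e \<subseteq> V \<and> card e = 2"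
proof -
  show fV: "finite V" and "card V = n" "card E = m" and k: "kappa V E = 1"
    and ed: "\<forall>e\<in>E. e \<subseteq> V \<and> card e = 2"
    using assms by (auto simp: Cnm_def simple_graph_def)
  show "n \<ge> 1"
  proof (rule ccontr)
    assume "\<not> n \<ge> 1" then have "card V = 0" using \<open>card V = n\<close> by simp
    then have "V = {}" using fV by simp
    then show False using k by (simp add: kappa_def)
  qed
  show "finite E" using ed fV by (meson PowI finite_Pow_iff finite_subset subsetI)
qed

lemma F_facts:
  assumes "(V,E) \<in> Cnm n m" "F \<subseteq> E"
  shows "rk V E - rk V F = kappa V F - 1" "cyc V F = card F + kappa V F - n"
    "1 \<le> kappa V F" "kappa V F \<le> n" "n \<le> card F + kappa V F" "card F \<le> m"
proof -
  note c = cnm_facts[OF assms(1)]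
  have fF: "finite F" using c(6) assms(2) finite_subset by blast
  show k1: "1 \<le> kappa V F" using kappa_pos[OF c(1)] c(2) c(5) by force
  show k2: "kappa V F \<le> n" using kappa_le[OF c(1)] c(2) by simp
  show fb: "n \<le> card F + kappa V F" using forest_bound[OF fF _ c(1)] c(7) assms(2) c(2) by blast
  show "rk V E - rk V F = kappa V F - 1" using k1 k2 c(2) c(4) by (simp add: rk_def)
  show "cyc V F = card F + kappa V F - n" using c(2) by (simp add: cyc_def)
  show "card F \<le> m" using c(3) c(6) assms(2) card_mono by blast
qed

lemma whitney_decomp:
  assumes "(V,E) \<in> Cnm n m"
  shows "whitney V E = (1 - varX*varY) * T n V E + (\<Sum>F\<in>Pow E. varX^n * varY^(card F + 1))"
proof -
  have "whitney V E = (\<Sum>F\<in>Pow E. (1 - varX*varY) *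
      (\<Sum>t< n - (rk V E - rk V F). varX^(rk V E - rk V F + t) * varY^(cyc V F + t))
      + varX^(rk V E - rk V F + (n - (rk V E - rk V F))) * varY^(cyc V F + (n - (rk V E - rk V F))))"
    unfolding whitney_def by (rule sum.cong) (simp_all only: telescope[symmetric])
  also have "\<dots> = (\<Sum>F\<in>Pow E. (1 - varX*varY) *
      (\<Sum>t< n - (rk V E - rk V F). varX^(rk V E - rk V F + t) * varY^(cyc V F + t))
      + varX^n * varY^(card F + 1))"
  proof (rule sum.cong)
    fix F assume "F \<in> Pow E"
    then have F: "F \<subseteq> E" by simp
    note f = F_facts[OF assms F]
    have "rk V E - rk V F + (n - (rk V E - rk V F)) = n" using f by simp
    moreover have "cyc V F + (n - (rk V E - rk V F)) = card F + 1" using f by simp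
    ultimately show "(1 - varX*varY) *
      (\<Sum>t< n - (rk V E - rk V F). varX^(rk V E - rk V F + t) * varY^(cyc V F + t))
      + varX^(rk V E - rk V F + (n - (rk V E - rk V F))) * varY^(cyc V F + (n - (rk V E - rk V F)))
      = (1 - varX*varY) *
      (\<Sum>t< n - (rk V E - rk V F). varX^(rk V E - rk V F + t) * varY^(cyc V F + t))
      + varX^n * varY^(card F + 1)" by simp
  qed simp
  also have "\<dots> = (1 - varX*varY) * T n V E + (\<Sum>F\<in>Pow E. varX^n * varY^(card F + 1))"
    unfolding T_def by (simp add: sum.distrib sum_distrib_left)
  finally show ?thesis .
qed

lemma coeff_T:
  assumes "(V,E) \<in> Cnm n m"
  shows "coeff (coeff (T n V E) b) a = (if a < n then real (Nik (b+n-a-1) (a+1) V E) else 0)"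
proof -
  have "coeff (coeff (T n V E) b) a = (\<Sum>F\<in>Pow E. \<Sum>t< n - (rk V E - rk V F).
      (if cyc V F + t = b \<and> rk V E - rk V F + t = a then 1 else 0))"
    unfolding T_def by (simp add: coeff_sum coeff_XY)
  also have "\<dots> = (\<Sum>F\<in>Pow E. if a < n \<and> card F = b+n-a-1 \<and> kappa V F \<le> a+1 then 1 else 0)"
  proof (rule sum.cong)
    fix F assume "F \<in> Pow E"
    then have F: "F \<subseteq> E" by simp
    note f = F_facts[OF assms F]
    have "(\<Sum>t< n - (rk V E - rk V F).
      (if cyc V F + t = b \<and> rk V E - rk V F + t = a then 1 else 0) :: real)
      = (\<Sum>t< n - (rk V E - rk V F). if t = a - (kappa V F - 1) then
           (if a < n \<and> card F = b+n-a-1 \<and> kappa V F \<le> a+1 then 1 else 0) else 0)"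
      proof (rule sum.cong)
        fix t assume "t \<in> {..< n - (rk V E - rk V F)}"
        then have "t < n - (kappa V F - 1)" using f(1) by simp
        note ar = arith_aux[OF f(3) f(4) f(5) this, of b a]
        show "(if cyc V F + t = b \<and> rk V E - rk V F + t = a then 1 else 0 :: real) = (if t = a - (kappa V F - 1) then
           (if a < n \<and> card F = b+n-a-1 \<and> kappa V F \<le> a+1 then 1 else 0) else 0)"
          unfolding f(1) f(2) ar by simp
      qed simp
    also have "\<dots> = (if a < n \<and> card F = b+n-a-1 \<and> kappa V F \<le> a+1 then 1 else 0)"
      proof -
      have "a < n \<Longrightarrow> kappa V F \<le> a+1 \<Longrightarrow> a - (kappa V F - 1) < n - (rk V E - rk V F)"
        using f by simp
      then show ?thesis by (simp add: sum.delta)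
    qed
    finally show "(\<Sum>t< n - (rk V E - rk V F).
      (if cyc V F + t = b \<and> rk V E - rk V F + t = a then 1 else 0) :: real)
      = (if a < n \<and> card F = b+n-a-1 \<and> kappa V F \<le> a+1 then 1 else 0)" .
  qed simp
  also have "\<dots> = (if a < n then real (Nik (b+n-a-1) (a+1) V E) else 0)"
    using sum_ind[OF finite_Pow_iff[THEN iffD2, OF cnm_facts(6)[OF assms]]]
    by (simp add: Nik_def)
  finally show ?thesis .
qed



lemma same_tail:
  assumes "(V,E) \<in> Cnm n m" "(V',E') \<in> Cnm n m"
  shows "(\<Sum>F\<in>Pow E. varX^n * varY^(card F + 1)) = (\<Sum>F\<in>Pow E'. varX^n * varY^(card F + 1))"
proof -
  note c = cnm_facts[OF assms(1)] and c' = cnm_facts[OF assms(2)]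
  obtain f where f: "bij_betw f E E'" using finite_same_card_bij[OF c(6) c'(6)] c(3) c'(3) by auto
  have b: "bij_betw (image f) (Pow E) (Pow E')" using f by (rule bij_betw_image_Pow)
  have "(\<Sum>F\<in>Pow E'. varX^n * varY^(card F + 1)) = (\<Sum>F\<in>Pow E. varX^n * varY^(card (f`F) + 1))"
    using sum.reindex_bij_betw[OF b, of "\<lambda>F. varX^n * varY^(card F + 1)"] by simp
  also have "\<dots> = (\<Sum>F\<in>Pow E. varX^n * varY^(card F + 1))"
  proof (rule sum.cong)
    fix F assume "F \<in> Pow E"
    then have "inj_on f F" using f by (auto simp: bij_betw_def intro: inj_on_subset)
    then show "varX^n * varY^(card (f`F) + 1) = varX^n * varY^(card F + 1)" by (simp add: card_image)
  qed simp
  finally show ?thesis by simp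
qed

lemma one_minus_XY: "1 - varX*varY \<noteq> 0"
proof
  assume h: "1 - varX*varY = 0"
  have "varX*varY = monom (monom 1 1) 1" using XY_monom[of 1 1] by simp
  then have "coeff (1 - varX*varY) 0 = 1" by (simp add: coeff_monom)
  then show False using h by simp
qed

lemma Nik_big: assumes "(V,E) \<in> Cnm n m" "m < i" shows "Nik i k V E = 0"
proof -
  have emp: "{F \<in> Pow E. card F = i \<and> kappa V F \<le> k} = {}"
  proof (rule ccontr)
    assume "{F \<in> Pow E. card F = i \<and> kappa V F \<le> k} \<noteq> {}"
    then obtain F where "F \<subseteq> E" "card F = i" by auto
    then show False using F_facts(6)[OF assms(1) \<open>F \<subseteq> E\<close>] assms(2) by simp
  qed
  show ?thesis unfolding Nik_def emp by simp
qed

lemma Nik_small: assumes "(V,E) \<in> Cnm n m" "i + k < n" shows "Nik i k V E = 0"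
proof -
  have emp: "{F \<in> Pow E. card F = i \<and> kappa V F \<le> k} = {}"
  proof (rule ccontr)
    assume "{F \<in> Pow E. card F = i \<and> kappa V F \<le> k} \<noteq> {}"
    then obtain F where "F \<subseteq> E" "card F = i" "kappa V F \<le> k" by auto
    then show False using F_facts(5)[OF assms(1) \<open>F \<subseteq> E\<close>] assms(2) by simp
  qed
  show ?thesis unfolding Nik_def emp by simp
qed

lemma nonneg_iff:
  assumes G: "(V,E) \<in> Cnm n m" and H: "(V',E') \<in> Cnm n m"
  shows "nonneg_poly2 (T n V E - T n V' E') \<longleftrightarrow>
    (\<forall>i \<in> {0..m}. \<forall>k \<in> {1..n}. Nik i k V E \<ge> Nik i k V' E')"
proof -
  have "nonneg_poly2 (T n V E - T n V' E') \<longleftrightarrow>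
     (\<forall>b a. a < n \<longrightarrow> Nik (b+n-a-1) (a+1) V' E' \<le> Nik (b+n-a-1) (a+1) V E)"
    unfolding nonneg_poly2_def by (simp add: coeff_diff coeff_T[OF G] coeff_T[OF H])
  also have "\<dots> \<longleftrightarrow> (\<forall>i \<in> {0..m}. \<forall>k \<in> {1..n}. Nik i k V E \<ge> Nik i k V' E')"
  proof
    assume h: "\<forall>b a. a < n \<longrightarrow> Nik (b+n-a-1) (a+1) V' E' \<le> Nik (b+n-a-1) (a+1) V E"
    show "\<forall>i \<in> {0..m}. \<forall>k \<in> {1..n}. Nik i k V E \<ge> Nik i k V' E'"
    proof (intro ballI)
      fix i k assume i: "i \<in> {0..m}" and k: "k \<in> {1..n}"
      show "Nik i k V E \<ge> Nik i k V' E'"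
      proof (cases "i + k < n")
        case True then show ?thesis using Nik_small[OF H] by simp
      next
        case False
        have "k - 1 < n" "i + k - n + n - (k-1) - 1 = i" "k - 1 + 1 = k" using k False by auto
        then show ?thesis using h[rule_format, of "k-1" "i+k-n"] by metis
      qed
    qed
  next
    assume h: "\<forall>i \<in> {0..m}. \<forall>k \<in> {1..n}. Nik i k V E \<ge> Nik i k V' E'"
    show "\<forall>b a. a < n \<longrightarrow> Nik (b+n-a-1) (a+1) V' E' \<le> Nik (b+n-a-1) (a+1) V E"
    proof (intro allI impI)
      fix b a assume a: "a < n"
      show "Nik (b+n-a-1) (a+1) V' E' \<le> Nik (b+n-a-1) (a+1) V E"
      proof (cases "b+n-a-1 \<le> m")
        case True then show ?thesis using h a by auto
      next
        case False then show ?thesis using Nik_big[OF H] by simp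
      qed
    qed
  qed
  finally show ?thesis .
qed

theorem mainTheorem5:
  fixes n m :: nat and V :: "nat set" and E :: "nat set set"
  assumes "(V, E) \<in> Cnm n m"
  shows "whitney_maximum n m V E \<longleftrightarrow> strong n m V E"
proof -
  have diff: "whitney V E - whitney V' E' = (1 - varX*varY) * (T n V E - T n V' E')"
    if H: "(V',E') \<in> Cnm n m" for V' E'
    using whitney_decomp[OF assms] whitney_decomp[OF H] same_tail[OF assms H]
    by (simp add: algebra_simps)
  have per: "(\<exists>Q. nonneg_poly2 Q \<and> whitney V E - whitney V' E' = (1 - varX * varY) * Q)
     \<longleftrightarrow> (\<forall>i \<in> {0..m}. \<forall>k \<in> {1..n}. Nik i k V E \<ge> Nik i k V' E')"
    if H: "(V',E') \<in> Cnm n m" for V' E'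
  proof -
    have "(\<exists>Q. nonneg_poly2 Q \<and> whitney V E - whitney V' E' = (1 - varX * varY) * Q)
      \<longleftrightarrow> nonneg_poly2 (T n V E - T n V' E')"
      unfolding diff[OF H] using one_minus_XY by auto
    then show ?thesis using nonneg_iff[OF assms H] by simp
  qed
  have bc: "(\<forall>(V', E') \<in> Cnm n m. \<exists>Q. nonneg_poly2 Q \<and>
        whitney V E - whitney V' E' = (1 - varX * varY) * Q) \<longleftrightarrow>
     (\<forall>(V', E') \<in> Cnm n m. \<forall>i \<in> {0..m}. \<forall>k \<in> {1..n}. Nik i k V E \<ge> Nik i k V' E')"
  proof (rule ball_cong[OF refl])
    fix x assume "x \<in> Cnm n m"
    then show "(case x of (V', E') \<Rightarrow> \<exists>Q. nonneg_poly2 Q \<and>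
        whitney V E - whitney V' E' = (1 - varX * varY) * Q) \<longleftrightarrow>
      (case x of (V', E') \<Rightarrow> \<forall>i \<in> {0..m}. \<forall>k \<in> {1..n}. Nik i k V E \<ge> Nik i k V' E')"
      using per by (cases x) simp
  qed
  show ?thesis unfolding whitney_maximum_def strong_def using assms bc by simp
qed


end
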